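(* Let $(\Omega,\mathcal F)$ be one of $(\{1,\dots,n\},2^{\{1,\dots,n\}})$, $(\mathbb N,2^{\mathbb N})$, or $([0,1],\mathcal B([0,1]))$, let $\mathcal X$ be the set of bounded measurable functions on it, and let $v$ be a continuous binary capacity. Then $I_v$ is convex on $\mathcal X$ if and only if there exists a finite set $A\subseteq\Omega$ such that $I_v(X)=\max_{\omega\in A}X(\omega)$ for all $X\in\mathcal X$.
   Context: A binary capacity is an increasing function $v:\mathcal F\to\{0,1\}$ (i.e. $v(A)\le v(B)$ for $A\subseteq B$) with $v(\varnothing)=0$, $v(\Omega)=1$; it is continuous if $v(A_n)\to0$ whenever $A_n\in\mathcal F$ decrease to $\varnothing$. $I_v(X)=\int_{-\infty}^0(v(X\ge x)-1)\,\mathrm dx+\int_0^\infty v(X\ge x)\,\mathrm dx$. Convexity means $I_v(\lambda X+(1-\lambda)Y)\le\lambda I_v(X)+(1-\lambda)I_v(Y)$ for all $\lambda\in[0,1]$, $X,Y\in\mathcal X$. *)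

theory Defs
  imports "HOL-Analysis.Analysis"
begin

definition binary_capacity :: "'a measure \<Rightarrow> ('a set \<Rightarrow> real) \<Rightarrow> bool" where
  "binary_capacity M v \<longleftrightarrow>
     (\<forall>A\<in>sets M. v A \<in> {0, 1}) \<and>
     (\<forall>A\<in>sets M. \<forall>B\<in>sets M. A \<subseteq> B \<longrightarrow> v A \<le> v B) \<and>
     v {} = 0 \<and> v (space M) = 1"

definition continuous_capacity :: "'a measure \<Rightarrow> ('a set \<Rightarrow> real) \<Rightarrow> bool" where
  "continuous_capacity M v \<longleftrightarrow>
     (\<forall>A :: nat \<Rightarrow> 'a set. (\<forall>n. A n \<in> sets M) \<longrightarrow> decseq A \<longrightarrow> (\<Inter>n. A n) = {}
        \<longrightarrow> (\<lambda>n. v (A n)) \<longlonglongrightarrow> 0)"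

definition bdd_meas :: "'a measure \<Rightarrow> ('a \<Rightarrow> real) set" where
  "bdd_meas M = {X. X \<in> borel_measurable M \<and> bounded (X ` space M)}"

definition choquet :: "'a measure \<Rightarrow> ('a set \<Rightarrow> real) \<Rightarrow> ('a \<Rightarrow> real) \<Rightarrow> real" where
  "choquet M v X =
     (LINT x:{..0}|lborel. v {\<omega>\<in>space M. X \<omega> \<ge> x} - 1) +
     (LINT x:{0..}|lborel. v {\<omega>\<in>space M. X \<omega> \<ge> x})"

definition choquet_convex :: "'a measure \<Rightarrow> ('a set \<Rightarrow> real) \<Rightarrow> bool" where
  "choquet_convex M v \<longleftrightarrow>
     (\<forall>X\<in>bdd_meas M. \<forall>Y\<in>bdd_meas M. \<forall>t::real. 0 \<le> t \<and> t \<le> 1 \<longrightarrow>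
        choquet M v (\<lambda>\<omega>. t * X \<omega> + (1 - t) * Y \<omega>)
          \<le> t * choquet M v X + (1 - t) * choquet M v Y)"

definition max_representable :: "'a measure \<Rightarrow> ('a set \<Rightarrow> real) \<Rightarrow> bool" where
  "max_representable M v \<longleftrightarrow>
     (\<exists>A. finite A \<and> A \<noteq> {} \<and> A \<subseteq> space M \<and>
        (\<forall>X\<in>bdd_meas M. choquet M v X = Max (X ` A)))"

end

theory Submission
  imports Defs
begin

lemma int_aux:
  fixes c d :: real and g :: "real \<Rightarrow> real"
  assumes g: "\<And>x. x < c \<Longrightarrow> g x = 1" "\<And>x. x > c \<Longrightarrow> g x = 0"
  shows "(LINT x:{..0}|lborel. g x - 1) + (LINT x:{0..}|lborel. g x) = c"
proof -
  define h where "h = (\<lambda>x. if x = c then g c else if x < c then 1 else (0::real))"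
  have geq: "g = h"
    using g by (auto simp: fun_eq_iff h_def)
  have hm[measurable]: "h \<in> borel_measurable borel" unfolding h_def by measurable
  show ?thesis
  proof (cases "c \<ge> 0")
    case True
    have 1: "integral\<^sup>L lborel (\<lambda>x. indicator {..0} x *\<^sub>R (h x - 1)) = integral\<^sup>L lborel (\<lambda>x::real. 0::real)"
      apply (rule integral_cong_AE, measurable)
      using AE_lborel_singleton[of c] apply eventually_elim using True by (auto simp: h_def split: split_indicator)
    have 2: "integral\<^sup>L lborel (\<lambda>x. indicator {0..} x *\<^sub>R h x) = integral\<^sup>L lborel (indicator {0..c})"
      apply (rule integral_cong_AE, measurable)
      using AE_lborel_singleton[of c] apply eventually_elim using True by (auto simp: h_def split: split_indicator)
    show ?thesis using True unfolding set_lebesgue_integral_def geq 1 2 by (simp add: measure_def)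
  next
    case False
    have 1: "integral\<^sup>L lborel (\<lambda>x. indicator {..0} x *\<^sub>R (h x - 1)) = integral\<^sup>L lborel (\<lambda>x::real. - indicator {c..0} x::real)"
      apply (rule integral_cong_AE, measurable)
      using AE_lborel_singleton[of c] apply eventually_elim using False by (auto simp: h_def split: split_indicator)
    have 2: "integral\<^sup>L lborel (\<lambda>x. indicator {0..} x *\<^sub>R h x) = integral\<^sup>L lborel (\<lambda>x::real. 0::real)"
      apply (rule integral_cong_AE, measurable)
      using AE_lborel_singleton[of c] apply eventually_elim using False by (auto simp: h_def split: split_indicator)
    show ?thesis using False unfolding set_lebesgue_integral_def geq 1 2 by (simp add: measure_def)
  qed
qed

lemma meas_ge:
  fixes X :: "'a \<Rightarrow> real"
  assumes "X \<in> borel_measurable M"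
  shows "{\<omega>\<in>space M. x \<le> X \<omega>} \<in> sets M"
proof -
  have "X -` {x..} \<inter> space M \<in> sets M" using measurable_sets[OF assms borel_closed[OF closed_atLeast]] .
  moreover have "X -` {x..} \<inter> space M = {\<omega>\<in>space M. x \<le> X \<omega>}" by auto
  ultimately show ?thesis by simp
qed

lemma binD:
  assumes "binary_capacity M v"
  shows "\<And>A. A \<in> sets M \<Longrightarrow> v A = 0 \<or> v A = 1"
    and "\<And>A B. A \<in> sets M \<Longrightarrow> B \<in> sets M \<Longrightarrow> A \<subseteq> B \<Longrightarrow> v A \<le> v B"
    and "v {} = 0" and "v (space M) = 1"
  using assms unfolding binary_capacity_def by auto

lemma choquet_eqI:
  assumes "\<And>x. x < c \<Longrightarrow> v {\<omega>\<in>space M. X \<omega> \<ge> x} = 1"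
    and "\<And>x. x > c \<Longrightarrow> v {\<omega>\<in>space M. X \<omega> \<ge> x} = 0"
  shows "choquet M v X = c"
  unfolding choquet_def by (rule int_aux) (use assms in auto)

lemma max_rep_convex:
  assumes "max_representable M v"
  shows "choquet_convex M v"
proof -
  obtain S where S: "finite S" "S \<noteq> {}" "S \<subseteq> space M"
    and rep: "\<And>X. X \<in> bdd_meas M \<Longrightarrow> choquet M v X = Max (X ` S)"
    using assms unfolding max_representable_def by blast
  show ?thesis unfolding choquet_convex_def
  proof (intro ballI allI impI)
    fix X Y and t :: real
    assume X: "X \<in> bdd_meas M" and Y: "Y \<in> bdd_meas M" and t: "0 \<le> t \<and> t \<le> 1"
    let ?Z = "\<lambda>\<omega>. t * X \<omega> + (1 - t) * Y \<omega>"
    have "?Z \<in> bdd_meas M"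
    proof -
      obtain a where a: "\<And>\<omega>. \<omega> \<in> space M \<Longrightarrow> \<bar>X \<omega>\<bar> \<le> a"
        using X unfolding bdd_meas_def bounded_iff by auto
      obtain b where b: "\<And>\<omega>. \<omega> \<in> space M \<Longrightarrow> \<bar>Y \<omega>\<bar> \<le> b"
        using Y unfolding bdd_meas_def bounded_iff by auto
      have "\<bar>?Z \<omega>\<bar> \<le> t * a + (1 - t) * b" if "\<omega> \<in> space M" for \<omega>
      proof -
        have "\<bar>?Z \<omega>\<bar> \<le> \<bar>t * X \<omega>\<bar> + \<bar>(1 - t) * Y \<omega>\<bar>" by (rule abs_triangle_ineq)
        also have "\<dots> = t * \<bar>X \<omega>\<bar> + (1 - t) * \<bar>Y \<omega>\<bar>" using t by (simp add: abs_mult)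
        also have "\<dots> \<le> t * a + (1 - t) * b"
          using t a[OF that] b[OF that] by (intro add_mono mult_left_mono) auto
        finally show ?thesis .
      qed
      then show ?thesis using X Y unfolding bdd_meas_def bounded_iff by auto
    qed
    then have "choquet M v ?Z = Max (?Z ` S)" by (rule rep)
    also have "\<dots> \<le> t * Max (X ` S) + (1 - t) * Max (Y ` S)"
    proof -
      obtain \<omega> where w: "\<omega> \<in> S" "Max (?Z ` S) = ?Z \<omega>"
        using S by (metis (no_types, lifting) Max_in finite_imageI image_iff image_is_empty)
      have "X \<omega> \<le> Max (X ` S)" "Y \<omega> \<le> Max (Y ` S)" using S w by auto
      then show ?thesis using w t by (smt (verit) mult_left_mono)
    qed
    finally show "choquet M v ?Z \<le> t * choquet M v X + (1 - t) * choquet M v Y"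
      using rep X Y by simp
  qed
qed

lemma convex_ideal:
  assumes bin: "binary_capacity M v" and cv: "choquet_convex M v"
    and A: "A \<in> sets M" and B: "B \<in> sets M" and vA: "v A = 0" and vB: "v B = 0"
  shows "v (A \<union> B) = 0"
proof (rule ccontr)
  assume "v (A \<union> B) \<noteq> 0"
  then have vAB: "v (A \<union> B) = 1" using binD(1)[OF bin] A B by blast
  have AS: "A \<subseteq> space M" "B \<subseteq> space M" using A B sets.sets_into_space by auto
  have bdd: "(\<lambda>\<omega>. 2 * indicator C \<omega>) \<in> bdd_meas M" if "C \<in> sets M" for C
  proof -
    have "\<bar>2 * indicator C \<omega>\<bar> \<le> (2::real)" for \<omega> by (auto split: split_indicator)
    then show ?thesis using that unfolding bdd_meas_def bounded_iff by (auto intro!: exI[of _ 2])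
  qed
  have ch0: "choquet M v (\<lambda>\<omega>. 2 * indicator C \<omega>) = 0" if C: "C \<in> sets M" "v C = 0" for C
  proof (rule choquet_eqI)
    fix x :: real assume "x < 0"
    then have "{\<omega>\<in>space M. 2 * indicator C \<omega> \<ge> x} = space M" by (auto split: split_indicator)
    then show "v {\<omega>\<in>space M. 2 * indicator C \<omega> \<ge> x} = 1" using binD(4)[OF bin] by simp
  next
    fix x :: real assume "x > 0"
    then have s: "{\<omega>\<in>space M. 2 * indicator C \<omega> \<ge> x} \<subseteq> C" by (auto split: split_indicator)
    have m: "{\<omega>\<in>space M. 2 * indicator C \<omega> \<ge> x} \<in> sets M"
      by (rule meas_ge) (use C in measurable)
    show "v {\<omega>\<in>space M. 2 * indicator C \<omega> \<ge> x} = 0"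
      using binD(2)[OF bin m C(1) s] binD(1)[OF bin m] C by auto
  qed
  have ch1: "choquet M v (\<lambda>\<omega>. 1/2 * (2 * indicator A \<omega>) + (1 - 1/2) * (2 * indicator B \<omega>)) = 1"
  proof (rule choquet_eqI)
    fix x :: real assume "x < 1"
    then have s: "A \<union> B \<subseteq> {\<omega>\<in>space M. 1/2 * (2 * indicator A \<omega>) + (1 - 1/2) * (2 * indicator B \<omega>) \<ge> x}"
      using AS by (auto split: split_indicator)
    have m: "{\<omega>\<in>space M. 1/2 * (2 * indicator A \<omega>) + (1 - 1/2) * (2 * indicator B \<omega>) \<ge> x} \<in> sets M"
      by (rule meas_ge) (use A B in measurable)
    show "v {\<omega>\<in>space M. 1/2 * (2 * indicator A \<omega>) + (1 - 1/2) * (2 * indicator B \<omega>) \<ge> x} = 1"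
      using binD(2)[OF bin _ m s] binD(1)[OF bin m] vAB A B by fastforce
  next
    fix x :: real assume "x > 1"
    then have s: "{\<omega>\<in>space M. 1/2 * (2 * indicator A \<omega>) + (1 - 1/2) * (2 * indicator B \<omega>) \<ge> x} \<subseteq> A"
      by (auto split: split_indicator)
    have m: "{\<omega>\<in>space M. 1/2 * (2 * indicator A \<omega>) + (1 - 1/2) * (2 * indicator B \<omega>) \<ge> x} \<in> sets M"
      by (rule meas_ge) (use A B in measurable)
    show "v {\<omega>\<in>space M. 1/2 * (2 * indicator A \<omega>) + (1 - 1/2) * (2 * indicator B \<omega>) \<ge> x} = 0"
      using binD(2)[OF bin m A s] binD(1)[OF bin m] vA by auto
  qed
  have "choquet M v (\<lambda>\<omega>. 1/2 * (2 * indicator A \<omega>) + (1 - 1/2) * (2 * indicator B \<omega>))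
      \<le> 1/2 * choquet M v (\<lambda>\<omega>. 2 * indicator A \<omega>) + (1 - 1/2) * choquet M v (\<lambda>\<omega>. 2 * indicator B \<omega>)"
  proof -
    have cvI: "\<And>X Y t. X \<in> bdd_meas M \<Longrightarrow> Y \<in> bdd_meas M \<Longrightarrow> 0 \<le> t \<Longrightarrow> t \<le> 1 \<Longrightarrow>
      choquet M v (\<lambda>\<omega>. t * X \<omega> + (1 - t) * Y \<omega>) \<le> t * choquet M v X + (1 - t) * choquet M v Y"
      using cv unfolding choquet_convex_def by blast
    show ?thesis by (rule cvI[OF bdd[OF A] bdd[OF B]]) auto
  qed
  then show False using ch0[OF A vA] ch0[OF B vB] ch1 by simp
qed

lemma cont_ev:
  assumes bin: "binary_capacity M v" and cont: "continuous_capacity M v"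
    and A: "\<And>n. A n \<in> sets M" "decseq A" "(\<Inter>n. A n) = {}"
  shows "\<exists>n. v (A n) = 0"
proof -
  have "(\<lambda>n. v (A n)) \<longlonglongrightarrow> 0" using cont A unfolding continuous_capacity_def by blast
  then have "eventually (\<lambda>n. dist (v (A n)) 0 < 1/2) sequentially"
    by (rule tendstoD) simp
  then obtain n where "dist (v (A n)) 0 < 1/2" by (meson eventually_sequentially order_refl)
  then show ?thesis using binD(1)[OF bin A(1)[of n]] by auto
qed

lemma finite_union_null:
  assumes bin: "binary_capacity M v"
    and ideal: "\<And>A B. A \<in> sets M \<Longrightarrow> B \<in> sets M \<Longrightarrow> v A = 0 \<Longrightarrow> v B = 0 \<Longrightarrow> v (A \<union> B) = 0"
    and "finite I" and "\<And>i. i \<in> I \<Longrightarrow> B i \<in> sets M \<and> v (B i) = 0"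
  shows "(\<Union>i\<in>I. B i) \<in> sets M \<and> v (\<Union>i\<in>I. B i) = 0"
  using assms(3,4)
proof (induction I rule: finite_induct)
  case empty
  then show ?case using binD(3)[OF bin] by simp
next
  case (insert x F)
  then show ?case using ideal[of "B x" "\<Union>i\<in>F. B i"] by auto
qed

lemma finite_S:
  assumes bin: "binary_capacity M v" and cont: "continuous_capacity M v"
    and cnt: "\<And>C. C \<subseteq> space M \<Longrightarrow> countable C \<Longrightarrow> C \<in> sets M"
  shows "finite {\<omega>\<in>space M. v {\<omega>} = 1}"
proof (rule ccontr)
  assume "infinite {\<omega>\<in>space M. v {\<omega>} = 1}"
  then obtain f :: "nat \<Rightarrow> _" where f: "inj f" "range f \<subseteq> {\<omega>\<in>space M. v {\<omega>} = 1}"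
    using infinite_countable_subset by blast
  have fsp: "f n \<in> space M" for n using f(2) by blast
  have fv: "v {f n} = 1" for n using f(2) by blast
  define A where "A n = f ` {n..}" for n
  have Am: "A n \<in> sets M" for n
  proof (rule cnt)
    show "A n \<subseteq> space M" unfolding A_def using fsp by blast
    show "countable (A n)" unfolding A_def by (rule countable_image) simp
  qed
  have "decseq A" unfolding A_def decseq_def by (simp add: image_mono)
  moreover have "(\<Inter>n. A n) = {}"
  proof -
    have "f n \<notin> A (Suc n)" for n
    proof
      assume "f n \<in> A (Suc n)"
      then obtain m where "m \<ge> Suc n" "f n = f m" unfolding A_def by auto
      then show False using f(1) by (metis inj_eq not_less_eq_eq order_refl)
    qed
    moreover have "\<exists>m. x = f m" if "x \<in> A 0" for x using that unfolding A_def by auto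
    ultimately show ?thesis by blast
  qed
  ultimately obtain n where n: "v (A n) = 0" using cont_ev[of M v A, OF bin cont Am] by blast
  have m1: "{f n} \<in> sets M" by (rule cnt) (use fsp in auto)
  have "{f n} \<subseteq> A n" unfolding A_def by auto
  then have "v {f n} \<le> v (A n)" using binD(2)[OF bin m1 Am] by blast
  then show False using n fv[of n] by simp
qed

lemma rep_from_S:
  assumes S: "finite S" "S \<noteq> {}" "S \<subseteq> space M"
    and vS: "\<And>A. A \<in> sets M \<Longrightarrow> v A = (if A \<inter> S = {} then 0 else 1)"
  shows "max_representable M v"
  unfolding max_representable_def
proof (intro exI conjI ballI)
  fix X assume X: "X \<in> bdd_meas M"
  then have Xm: "X \<in> borel_measurable M" unfolding bdd_meas_def by auto
  show "choquet M v X = Max (X ` S)"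
  proof (rule choquet_eqI)
    fix x assume x: "x < Max (X ` S)"
    have "Max (X ` S) \<in> X ` S" using S by simp
    then obtain \<omega> where w: "\<omega> \<in> S" "X \<omega> = Max (X ` S)" by (metis imageE)
    then have "\<omega> \<in> {\<omega>\<in>space M. X \<omega> \<ge> x} \<inter> S" using S x by auto
    then show "v {\<omega>\<in>space M. X \<omega> \<ge> x} = 1" using vS[OF meas_ge[OF Xm]] by auto
  next
    fix x assume x: "x > Max (X ` S)"
    have "X \<omega> \<le> Max (X ` S)" if "\<omega> \<in> S" for \<omega> using S that by simp
    then have "{\<omega>\<in>space M. X \<omega> \<ge> x} \<inter> S = {}" using x by force
    then show "v {\<omega>\<in>space M. X \<omega> \<ge> x} = 0" using vS[OF meas_ge[OF Xm]] by auto
  qed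
qed (use S in auto)

lemma main_generic:
  assumes bin: "binary_capacity M v" and cont: "continuous_capacity M v"
    and cnt: "\<And>C. C \<subseteq> space M \<Longrightarrow> countable C \<Longrightarrow> C \<in> sets M"
    and key: "(\<And>A B. A \<in> sets M \<Longrightarrow> B \<in> sets M \<Longrightarrow> v A = 0 \<Longrightarrow> v B = 0 \<Longrightarrow> v (A \<union> B) = 0)
       \<Longrightarrow> (\<And>A. A \<in> sets M \<Longrightarrow> A \<inter> {\<omega>\<in>space M. v {\<omega>} = 1} = {} \<Longrightarrow> v A = 0)"
  shows "choquet_convex M v \<longleftrightarrow> max_representable M v"
proof
  assume cv: "choquet_convex M v"
  define S where "S = {\<omega>\<in>space M. v {\<omega>} = 1}"
  have null: "\<And>A. A \<in> sets M \<Longrightarrow> A \<inter> S = {} \<Longrightarrow> v A = 0"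
    unfolding S_def by (rule key) (rule convex_ideal[OF bin cv])
  have fin: "finite S" unfolding S_def by (rule finite_S[OF bin cont cnt])
  have ne: "S \<noteq> {}" using null[of "space M"] binD(4)[OF bin] by auto
  have vS: "v A = (if A \<inter> S = {} then 0 else 1)" if A: "A \<in> sets M" for A
  proof (cases "A \<inter> S = {}")
    case False
    then obtain \<omega> where w: "\<omega> \<in> A" "\<omega> \<in> S" by auto
    have "{\<omega>} \<in> sets M" using w by (intro cnt) (auto simp: S_def)
    then have "v {\<omega>} \<le> v A" using binD(2)[OF bin _ A] w by auto
    then show ?thesis using w False binD(1)[OF bin A] by (auto simp: S_def)
  qed (use null A in auto)
  show "max_representable M v" by (rule rep_from_S[OF fin ne _ vS]) (auto simp: S_def)
qed (rule max_rep_convex)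

lemma key_countable:
  assumes bin: "binary_capacity M v" and cont: "continuous_capacity M v"
    and cs: "countable (space M)" and sM: "sets M = Pow (space M)"
    and ideal: "\<And>A B. A \<in> sets M \<Longrightarrow> B \<in> sets M \<Longrightarrow> v A = 0 \<Longrightarrow> v B = 0 \<Longrightarrow> v (A \<union> B) = 0"
    and A: "A \<in> sets M" and AS: "A \<inter> {\<omega>\<in>space M. v {\<omega>} = 1} = {}"
  shows "v A = 0"
proof (cases "A = {}")
  case True then show ?thesis using binD(3)[OF bin] by simp
next
  case False
  have Asp: "A \<subseteq> space M" using A sM by simp
  have cA: "countable A" using cs Asp by (rule countable_subset[rotated])
  define F where "F n = from_nat_into A ` {..<n}" for n
  define B where "B n = A - F n" for n
  have Bsp: "B n \<subseteq> space M" for n using Asp unfolding B_def by blast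
  have Bm: "B n \<in> sets M" for n using Bsp[of n] sM by simp
  have "F m \<subseteq> F n" if "m \<le> n" for m n unfolding F_def using that by (intro image_mono) auto
  then have "decseq B" unfolding B_def decseq_def by blast
  moreover have "(\<Inter>n. B n) = {}"
  proof -
    have "from_nat_into A k \<notin> B (Suc k)" for k unfolding B_def F_def by blast
    moreover have "\<exists>k. x = from_nat_into A k" if "x \<in> B 0" for x
    proof -
      from that have "x \<in> A" unfolding B_def by simp
      then obtain k where "from_nat_into A k = x" using from_nat_into_surj[OF cA] by blast
      then show ?thesis by (intro exI[of _ k]) simp
    qed
    ultimately show ?thesis by blast
  qed
  ultimately obtain n where n: "v (B n) = 0" using cont_ev[of M v B, OF bin cont Bm] by blast
  have sing: "{from_nat_into A i} \<in> sets M \<and> v {from_nat_into A i} = 0" for i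
  proof -
    have a: "from_nat_into A i \<in> A" using False by (rule from_nat_into)
    then have m: "{from_nat_into A i} \<in> sets M" using Asp sM by blast
    have "from_nat_into A i \<in> space M" using a Asp by blast
    then have "v {from_nat_into A i} \<noteq> 1" using AS a by blast
    then show ?thesis using binD(1)[OF bin m] m by simp
  qed
  have U: "(\<Union>i\<in>{..<n}. {from_nat_into A i}) \<in> sets M \<and> v (\<Union>i\<in>{..<n}. {from_nat_into A i}) = 0"
    by (rule finite_union_null[OF bin ideal]) (simp_all add: sing)
  have FU: "F n = (\<Union>i\<in>{..<n}. {from_nat_into A i})" unfolding F_def by blast
  have sub: "A \<subseteq> B n \<union> F n" unfolding B_def by blast
  have Fm: "F n \<in> sets M" and Fv: "v (F n) = 0" using U FU by simp_all
  have "v (B n \<union> F n) = 0" using ideal[OF Bm Fm n Fv] .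
  moreover have "v A \<le> v (B n \<union> F n)"
    using binD(2)[OF bin A sets.Un[OF Bm Fm] sub] .
  ultimately show ?thesis using binD(1)[OF bin A] by auto
qed

lemma key_unit:
  fixes v :: "real set \<Rightarrow> real"
  defines "M \<equiv> restrict_space borel {0..1::real}"
  assumes bin: "binary_capacity M v" and cont: "continuous_capacity M v"
    and ideal: "\<And>A B. A \<in> sets M \<Longrightarrow> B \<in> sets M \<Longrightarrow> v A = 0 \<Longrightarrow> v B = 0 \<Longrightarrow> v (A \<union> B) = 0"
    and A: "A \<in> sets M" and AS: "A \<inter> {\<omega>\<in>space M. v {\<omega>} = 1} = {}"
  shows "v A = 0"
proof -
  have sp: "space M = {0..1}" unfolding M_def by (simp add: space_restrict_space)
  have sM: "C \<in> sets M \<longleftrightarrow> C \<subseteq> {0..1} \<and> C \<in> sets borel" for C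
    unfolding M_def by (rule sets_restrict_space_iff) simp
  have Asub: "A \<subseteq> {0..1}" "A \<in> sets borel" using A sM by auto
  have loc: "\<exists>r>0. v (A \<inter> ball p r) = 0" if p: "p \<in> {0..1}" for p
  proof -
    define C where "C n = A \<inter> ball p (1 / (Suc n)) - {p}" for n
    have Cm: "C n \<in> sets M" for n using Asub unfolding C_def sM by auto
    have "decseq C" unfolding C_def decseq_def
    proof (intro allI impI)
      fix m n :: nat assume "m \<le> n"
      then have "1 / real (Suc n) \<le> 1 / real (Suc m)" by (simp add: frac_le)
      then show "A \<inter> ball p (1 / real (Suc n)) - {p} \<subseteq> A \<inter> ball p (1 / real (Suc m)) - {p}" by auto
    qed
    moreover have "(\<Inter>n. C n) = {}"
    proof (rule ccontr)
      assume "(\<Inter>n. C n) \<noteq> {}"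
      then obtain x where x: "\<And>n. x \<in> C n" by blast
      then have "x \<noteq> p" unfolding C_def by auto
      then have "dist p x > 0" by simp
      then obtain n where "1 / real (Suc n) < dist p x" using nat_approx_posE by blast
      then show False using x[of n] unfolding C_def by auto
    qed
    ultimately obtain n where n: "v (C n) = 0" using cont_ev[of M v C, OF bin cont Cm] by blast
    have Pm: "A \<inter> {p} \<in> sets M" using Asub unfolding sM by auto
    have P0: "v (A \<inter> {p}) = 0"
    proof (cases "p \<in> A")
      case True
      then have "v {p} \<noteq> 1" using AS p sp by auto
      then show ?thesis using True binD(1)[OF bin Pm] by (auto simp: Int_absorb1)
    next
      case False then show ?thesis using binD(3)[OF bin] by simp
    qed
    have "A \<inter> ball p (1 / (Suc n)) \<subseteq> C n \<union> (A \<inter> {p})" unfolding C_def by auto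
    moreover have "A \<inter> ball p (1 / (Suc n)) \<in> sets M" using Asub unfolding sM by auto
    moreover have "v (C n \<union> (A \<inter> {p})) = 0" using ideal[OF Cm Pm n P0] .
    ultimately have "v (A \<inter> ball p (1 / (Suc n))) \<le> 0"
      using binD(2)[OF bin] Cm Pm by (metis sets.Un)
    then show ?thesis using binD(1)[OF bin \<open>A \<inter> ball p (1 / (Suc n)) \<in> sets M\<close>]
      by (intro exI[of _ "1 / (Suc n)"]) auto
  qed
  then obtain r where r: "\<And>p. p \<in> {0..1} \<Longrightarrow> r p > 0 \<and> v (A \<inter> ball p (r p)) = 0" by metis
  have cover: "{0..1::real} \<subseteq> (\<Union>p\<in>{0..1}. ball p (r p))" using r by force
  have opn: "\<And>p. p \<in> {0..1::real} \<Longrightarrow> open (ball p (r p))" by simp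
  obtain C' where C': "C' \<subseteq> {0..1}" "finite C'" "{0..1::real} \<subseteq> (\<Union>p\<in>C'. ball p (r p))"
    by (rule compactE_image[OF compact_Icc opn cover])
  have U: "(\<Union>p\<in>C'. A \<inter> ball p (r p)) \<in> sets M \<and> v (\<Union>p\<in>C'. A \<inter> ball p (r p)) = 0"
    by (rule finite_union_null[OF bin ideal C'(2)]) (use r C' Asub sM in auto)
  have "A \<subseteq> (\<Union>p\<in>C'. A \<inter> ball p (r p))" using C'(3) Asub by blast
  then have "v A \<le> 0" using binD(2)[OF bin A] U by fastforce
  then show ?thesis using binD(1)[OF bin A] by auto
qed

theorem proposition5:
  shows "(\<forall>(n::nat) v. binary_capacity (count_space {1..n}) v \<and>
              continuous_capacity (count_space {1..n}) v \<longrightarrow>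
            (choquet_convex (count_space {1..n}) v \<longleftrightarrow>
             max_representable (count_space {1..n}) v))
       \<and> (\<forall>v. binary_capacity (count_space (UNIV::nat set)) v \<and>
              continuous_capacity (count_space (UNIV::nat set)) v \<longrightarrow>
            (choquet_convex (count_space (UNIV::nat set)) v \<longleftrightarrow>
             max_representable (count_space (UNIV::nat set)) v))
       \<and> (\<forall>v. binary_capacity (restrict_space borel {0..1::real}) v \<and>
              continuous_capacity (restrict_space borel {0..1::real}) v \<longrightarrow>
            (choquet_convex (restrict_space borel {0..1::real}) v \<longleftrightarrow>
             max_representable (restrict_space borel {0..1::real}) v))"
proof (intro conjI allI impI; elim conjE)
  fix n :: nat and v
  assume bin: "binary_capacity (count_space {1..n}) v" and cont: "continuous_capacity (count_space {1..n}) v"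
  show "choquet_convex (count_space {1..n}) v \<longleftrightarrow> max_representable (count_space {1..n}) v"
    by (rule main_generic[OF bin cont], simp, rule key_countable[OF bin cont]) auto
next
  fix v
  assume bin: "binary_capacity (count_space (UNIV::nat set)) v" and cont: "continuous_capacity (count_space (UNIV::nat set)) v"
  show "choquet_convex (count_space (UNIV::nat set)) v \<longleftrightarrow> max_representable (count_space (UNIV::nat set)) v"
    by (rule main_generic[OF bin cont], simp, rule key_countable[OF bin cont]) auto
next
  fix v
  assume bin: "binary_capacity (restrict_space borel {0..1::real}) v" and cont: "continuous_capacity (restrict_space borel {0..1::real}) v"
  have cnt: "C \<in> sets (restrict_space borel {0..1::real})" if "C \<subseteq> space (restrict_space borel {0..1::real})" "countable C" for C
  proof -
    have "C \<in> sets borel" by (rule sets.countable) (use that in auto)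
    then show ?thesis using that by (simp add: sets_restrict_space_iff space_restrict_space)
  qed
  show "choquet_convex (restrict_space borel {0..1::real}) v \<longleftrightarrow> max_representable (restrict_space borel {0..1::real}) v"
    by (rule main_generic[OF bin cont cnt], assumption+, rule key_unit[OF bin cont]) auto
qed
end
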